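(* Let $G=(V=V_0\uplus V_1,v_{\mathsf{init}},E,\gamma)$ be a quantitative graph game with rational discount factor $d=\frac pq>1$, and let $\mu>0$ be the maximum of the absolute values of the costs along transitions. The number of iterations required by the value-iteration algorithm to compute the optimal cost $W$ is (1) $O(|V|)$ when $d\ge 2$; (2) $O\!\left(\frac{\log\mu}{d-1}+|V|\right)$ when $1<d<2$.
   Context: A quantitative graph game $G=(V=V_0\uplus V_1, v_{\mathsf{init}},E,\gamma)$ consists of a finite directed graph $(V,E)$ in which every state has at least one outgoing edge, a partition of $V$ into $V_0$ (maximizing player) and $V_1$ (minimizing player), an initial state, and an integer cost function $\gamma:E\to\mathbb{Z}$. The value-iteration algorithm computes, for $k=1,2,\dots$, the values $\mathit{wt}_1(v)=\max\{\gamma(v,w):(v,w)\in E\}$ if $v\in V_0$ ($\min$ if $v\in V_1$) and $\mathit{wt}_{k+1}(v)=\max\{\gamma(v,w)+\frac1d\mathit{wt}_k(w):(v,w)\in E\}$ if $v\in V_0$ ($\min$ if $v\in V_1$). The optimal cost is $W=\lim_{k\to\infty}\mathit{wt}_k(v_{\mathsf{init}})$; it lies in the interval $[\mathit{wt}_k(v_{\mathsf{init}})-\frac{\mu}{(d-1)d^{k-1}},\ \mathit{wt}_k(v_{\mathsf{init}})+\frac{\mu}{(d-1)d^{k-1}}]$ and is a rational number with denominator at most $(p^{|V|}-q^{|V|})p^{|V|}$. The number of iterations required is the number $k$ of iterations after which this interval has size at most $1/\big((p^{|V|}-q^{|V|})^2p^{2|V|}\big)$, so that $W$ is determined as the unique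 rational number with denominator at most $(p^{|V|}-q^{|V|})p^{|V|}$ in that interval. *)

theory Defs
  imports Complex_Main
begin

record 'v game =
  V0 :: "'v set"
  V1 :: "'v set"
  vinit :: 'v
  edges :: "('v \<times> 'v) set"
  cost :: "'v \<times> 'v \<Rightarrow> int"

definition vertices :: "'v game \<Rightarrow> 'v set" where
  "vertices G = V0 G \<union> V1 G"

definition valid_game :: "'v game \<Rightarrow> bool" where
  "valid_game G \<longleftrightarrow>
     finite (vertices G) \<and> V0 G \<inter> V1 G = {} \<and> vinit G \<in> vertices G \<and>
     edges G \<subseteq> vertices G \<times> vertices G \<and>
     (\<forall>v \<in> vertices G. \<exists>w. (v, w) \<in> edges G)"

definition game_mu :: "'v game \<Rightarrow> int" where
  "game_mu G = Max ((\<lambda>e. \<bar>cost G e\<bar>) ` edges G)"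

text \<open>Value iteration (for reference): wt k v is wt_{k+1}(v) in the paper's indexing.\<close>
fun wt :: "real \<Rightarrow> 'v game \<Rightarrow> nat \<Rightarrow> 'v \<Rightarrow> real" where
  "wt d G 0 v = (if v \<in> V0 G then Max ((\<lambda>w. real_of_int (cost G (v, w))) ` {w. (v, w) \<in> edges G})
                 else Min ((\<lambda>w. real_of_int (cost G (v, w))) ` {w. (v, w) \<in> edges G}))"
| "wt d G (Suc k) v = (if v \<in> V0 G
       then Max ((\<lambda>w. real_of_int (cost G (v, w)) + wt d G k w / d) ` {w. (v, w) \<in> edges G})
       else Min ((\<lambda>w. real_of_int (cost G (v, w)) + wt d G k w / d) ` {w. (v, w) \<in> edges G}))"

text \<open>Number of iterations required: the least k \<ge> 1 such that the interval
  [wt_k - mu/((d-1) d^(k-1)), wt_k + mu/((d-1) d^(k-1))] has size at most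
  1/((p^|V| - q^|V|)^2 p^(2|V|)), where d = p/q.\<close>
definition num_iterations :: "nat \<Rightarrow> nat \<Rightarrow> 'v game \<Rightarrow> nat" where
  "num_iterations p q G =
     (let d = real p / real q; n = card (vertices G); \<mu> = real_of_int (game_mu G) in
      LEAST k. 1 \<le> k \<and>
        2 * \<mu> / ((d - 1) * d ^ (k - 1))
          \<le> 1 / ((real p ^ n - real q ^ n)\<^sup>2 * real p ^ (2 * n)))"

end

theory Submission
  imports Defs
begin

lemma pow_ge_M:
  fixes d M :: real
  assumes "1 < d" "0 < M"
  shows "M \<le> d ^ nat \<lceil>ln M / ln d\<rceil>"
proof -
  let ?k = "nat \<lceil>ln M / ln d\<rceil>"
  have ld: "0 < ln d" using assms by simp
  have "ln M / ln d \<le> real ?k" by linarith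
  hence "ln M \<le> real ?k * ln d" using ld by (simp add: divide_le_eq)
  hence "exp (ln M) \<le> exp (real ?k * ln d)" by simp
  also have "exp (real ?k * ln d) = d ^ ?k"
    using assms by (simp add: exp_of_nat_mult)
  finally show ?thesis using assms by simp
qed

lemma max_aux:
  fixes x a A L P P' :: real
  assumes "x = a + L + P'" "0 \<le> A" "a \<le> A" "P' = P" "0 \<le> L" "0 \<le> P"
  shows "max 0 x \<le> A + L + P"
  using assms by simp

lemma key:
  fixes p q :: nat and G :: "'v game"
  assumes q: "0 < q" "q < p" and vg: "valid_game G" and mu: "0 < game_mu G"
  defines "d \<equiv> real p / real q"
  shows "real (num_iterations p q G) \<le>
     (2 + \<bar>ln 2 - ln (d - 1)\<bar> / ln d) + ln (real_of_int (game_mu G)) / ln d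
       + (4 * ln (real p) / ln d) * real (card (vertices G))"
proof -
  define n where "n = card (vertices G)"
  define \<mu> where "\<mu> = real_of_int (game_mu G)"
  have d1: "1 < d" using q by (simp add: d_def)
  have ld: "0 < ln d" using d1 by simp
  have mu1: "1 \<le> \<mu>" using mu by (simp add: \<mu>_def)
  have p1: "1 < real p" using q by simp
  define X where "X = (real p ^ n - real q ^ n)\<^sup>2 * real p ^ (2 * n)"
  have n1: "1 \<le> n" using vg unfolding valid_game_def n_def
    by (metis One_nat_def Suc_leI card_gt_0_iff empty_iff)
  have qn: "real q ^ n < real p ^ n" using q n1
    by (simp add: power_strict_mono)
  have qn0: "0 < real q ^ n" using q by simp
  have X0: "0 < X" unfolding X_def using qn p1 by simp
  have "(real p ^ n - real q ^ n)\<^sup>2 \<le> (real p ^ n)\<^sup>2"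
    using qn qn0 by (intro power_mono) auto
  moreover have "real p ^ (4 * n) = (real p ^ n)\<^sup>2 * real p ^ (2 * n)"
  proof -
    have "real p ^ (4 * n) = real p ^ (n * 2 + 2 * n)" by (simp add: algebra_simps)
    also have "\<dots> = (real p ^ n)\<^sup>2 * real p ^ (2 * n)" by (simp only: power_add power_mult)
    finally show ?thesis .
  qed
  ultimately have Xle: "X \<le> real p ^ (4 * n)" unfolding X_def
    by (simp add: mult_right_mono)
  define M where "M = 2 * \<mu> * real p ^ (4 * n) / (d - 1)"
  have M0: "0 < M" unfolding M_def using mu1 d1 p1 by simp
  define kk where "kk = nat \<lceil>ln M / ln d\<rceil>"
  have dk: "M \<le> d ^ kk" unfolding kk_def by (rule pow_ge_M[OF d1 M0])
  have dkpos: "0 < d ^ kk" using d1 by simp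
  have P: "1 \<le> Suc kk \<and> 2 * \<mu> / ((d - 1) * d ^ (Suc kk - 1)) \<le> 1 / X"
  proof -
    have "2 * \<mu> * X \<le> 2 * \<mu> * real p ^ (4 * n)" using Xle mu1 by simp
    also have "\<dots> = (d - 1) * M" unfolding M_def using d1 by simp
    also have "\<dots> \<le> (d - 1) * d ^ kk" using dk d1 by simp
    finally have "2 * \<mu> * X \<le> (d - 1) * d ^ kk" .
    moreover have "0 < (d - 1) * d ^ kk" using d1 dkpos by simp
    ultimately show ?thesis using X0 by (simp add: divide_le_eq le_divide_eq mult.commute)
  qed
  have "num_iterations p q G \<le> Suc kk"
    unfolding num_iterations_def Let_def
    using P by (simp add: d_def n_def \<mu>_def X_def Least_le)
  hence "real (num_iterations p q G) \<le> 1 + real kk" by simp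
  also have "real kk \<le> max 0 (ln M / ln d) + 1" unfolding kk_def by linarith
  also have "ln M = ln 2 - ln (d - 1) + ln \<mu> + real (4 * n) * ln (real p)"
    unfolding M_def using mu1 d1 p1 by (simp add: ln_mult ln_div ln_realpow)
  finally have A: "real (num_iterations p q G) \<le>
      2 + max 0 ((ln 2 - ln (d - 1) + ln \<mu> + real (4 * n) * ln (real p)) / ln d)" by simp
  have lnmu: "0 \<le> ln \<mu>" using mu1 by simp
  have lnp: "0 \<le> ln (real p)" using p1 by simp
  have "max 0 ((ln 2 - ln (d - 1) + ln \<mu> + real (4 * n) * ln (real p)) / ln d)
     \<le> \<bar>ln 2 - ln (d - 1)\<bar> / ln d + ln \<mu> / ln d + (4 * ln (real p) / ln d) * real n"
  proof -
    have a: "(ln 2 - ln (d - 1)) / ln d \<le> \<bar>ln 2 - ln (d - 1)\<bar> / ln d"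
      using ld by (simp add: divide_right_mono)
    have b: "real (4 * n) * ln (real p) / ln d = (4 * ln (real p) / ln d) * real n" by simp
    have c: "0 \<le> ln \<mu> / ln d" "0 \<le> (4 * ln (real p) / ln d) * real n"
      using ld lnmu lnp by simp_all
    have "(ln 2 - ln (d - 1) + ln \<mu> + real (4 * n) * ln (real p)) / ln d
       = (ln 2 - ln (d - 1)) / ln d + ln \<mu> / ln d + real (4 * n) * ln (real p) / ln d"
      by (simp add: add_divide_distrib)
    moreover have "0 \<le> \<bar>ln 2 - ln (d - 1)\<bar> / ln d" using ld by simp
    ultimately show ?thesis using a b c max_aux by metis
  qed
  with A show ?thesis unfolding n_def \<mu>_def by linarith
qed

theorem theorem1:
  fixes p q :: nat
  assumes "0 < q" and "q < p"
  shows
    "(real p / real q \<ge> 2 \<longrightarrow>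
       (\<forall>\<mu>::int. 0 < \<mu> \<longrightarrow>
          (\<exists>C::real. \<forall>G :: 'v game. valid_game G \<longrightarrow> game_mu G = \<mu> \<longrightarrow>
             real (num_iterations p q G) \<le> C * real (card (vertices G)))))
   \<and> (real p / real q < 2 \<longrightarrow>
       (\<exists>C::real. \<forall>G :: 'v game. valid_game G \<longrightarrow> 0 < game_mu G \<longrightarrow>
          real (num_iterations p q G)
            \<le> C * (ln (real_of_int (game_mu G)) / (real p / real q - 1)
                   + real (card (vertices G)))))"
proof -
  define d where "d = real p / real q"
  define A where "A = 2 + \<bar>ln 2 - ln (d - 1)\<bar> / ln d"
  define B where "B = 4 * ln (real p) / ln d"
  have d1: "1 < d" using assms by (simp add: d_def)
  have ld: "0 < ln d" using d1 by simp
  have A0: "0 \<le> A" unfolding A_def using ld by simp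
  have B0: "0 \<le> B" unfolding B_def using ld assms by simp
  have n1: "1 \<le> real (card (vertices G))" if "valid_game G" for G :: "'v game"
    using that unfolding valid_game_def
    by (metis One_nat_def Suc_leI card_gt_0_iff empty_iff of_nat_1 of_nat_le_iff)
  have K: "real (num_iterations p q G) \<le> A + ln (real_of_int (game_mu G)) / ln d
       + B * real (card (vertices G))" if "valid_game G" "0 < game_mu G" for G :: "'v game"
    using key[OF assms that] unfolding A_def B_def d_def by simp
  have part1: "\<exists>C::real. \<forall>G :: 'v game. valid_game G \<longrightarrow> game_mu G = \<mu> \<longrightarrow>
             real (num_iterations p q G) \<le> C * real (card (vertices G))"
    if mu: "0 < \<mu>" for \<mu> :: int
  proof (intro exI allI impI)
    fix G :: "'v game" assume G: "valid_game G" "game_mu G = \<mu>"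
    let ?n = "real (card (vertices G))"
    have l0: "0 \<le> ln (real_of_int \<mu>) / ln d" using mu ld by simp
    have "real (num_iterations p q G) \<le> A + ln (real_of_int \<mu>) / ln d + B * ?n"
      using K[OF G(1)] G mu by simp
    also have "\<dots> \<le> (A + ln (real_of_int \<mu>) / ln d) * ?n + B * ?n"
    proof -
      have "(A + ln (real_of_int \<mu>) / ln d) * 1 \<le> (A + ln (real_of_int \<mu>) / ln d) * ?n"
        using n1[OF G(1)] A0 l0 by (intro mult_left_mono) auto
      thus ?thesis by simp
    qed
    finally show "real (num_iterations p q G) \<le> (A + ln (real_of_int \<mu>) / ln d + B) * ?n"
      by (simp add: algebra_simps)
  qed
  have part2: "\<exists>C::real. \<forall>G :: 'v game. valid_game G \<longrightarrow> 0 < game_mu G \<longrightarrow>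
          real (num_iterations p q G)
            \<le> C * (ln (real_of_int (game_mu G)) / (d - 1) + real (card (vertices G)))"
  proof (intro exI allI impI)
    fix G :: "'v game" assume G: "valid_game G" "0 < game_mu G"
    let ?n = "real (card (vertices G))"
    let ?l = "ln (real_of_int (game_mu G))"
    let ?C = "max (A + B) ((d - 1) / ln d)"
    have l0: "0 \<le> ?l" using G by simp
    have n1': "1 \<le> ?n" using n1[OF G(1)] .
    have e1: "?l / ln d = ((d - 1) / ln d) * (?l / (d - 1))" using d1 ld by simp
    have t1: "((d - 1) / ln d) * (?l / (d - 1)) \<le> ?C * (?l / (d - 1))"
      using l0 d1 by (intro mult_right_mono) (simp_all add: max.cobounded2)
    have t2: "A + B * ?n \<le> (A + B) * ?n" using A0 n1'
    proof -
      have "B * ?n + A * 1 \<le> B * ?n + A * ?n" using A0 n1' by (intro add_left_mono mult_left_mono) auto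
      thus ?thesis by (simp add: algebra_simps)
    qed
    have t3: "(A + B) * ?n \<le> ?C * ?n" using n1' by (intro mult_right_mono) (simp_all add: max.cobounded1)
    have "real (num_iterations p q G) \<le> A + ?l / ln d + B * ?n" using K[OF G] .
    also have "\<dots> \<le> ?C * (?l / (d - 1)) + ?C * ?n" using e1 t1 t2 t3 by linarith
    finally show "real (num_iterations p q G) \<le> ?C * (?l / (d - 1) + ?n)"
      by (simp add: algebra_simps)
  qed
  show ?thesis using part1 part2 unfolding d_def by blast
qed

end
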